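(* Every (not necessarily translation-invariant) Miura type transformation over the equation $u_t=u^{5/2}u_5$ (considered in the complex-analytic category) has order at most $5$.
   Context: $u_j=\partial^ju/\partial x^j$. A Miura type transformation over an evolution equation $u_t=P$ is a pair of an evolution equation $v_t=R(x,t,v,v_1,\dots,v_r)$ and a substitution $u=S(x,t,v,v_1,\dots,v_n)$ such that whenever $v$ satisfies $v_t=R$, the function $u=S$ satisfies $u_t=P$; its order is the largest $n$ such that $S$ depends nontrivially on $v_n$. Considerations are local. *)

theory Defs
  imports "HOL-Analysis.Analysis"
begin

text \<open>A point of the (infinite) jet space is (x, t, w) where w k stands for v_k.\<close>

type_synonym jfun = "complex \<Rightarrow> complex \<Rightarrow> (nat \<Rightarrow> complex) \<Rightarrow> complex"

definition dX :: "jfun \<Rightarrow> jfun" where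
  "dX F = (\<lambda>x t w. deriv (\<lambda>y. F y t w) x)"

definition dT :: "jfun \<Rightarrow> jfun" where
  "dT F = (\<lambda>x t w. deriv (\<lambda>s. F x s w) t)"

definition dV :: "nat \<Rightarrow> jfun \<Rightarrow> jfun" where
  "dV k F = (\<lambda>x t w. deriv (\<lambda>z. F x t (w(k := z))) (w k))"

definition depends_upto :: "nat \<Rightarrow> jfun \<Rightarrow> bool" where
  "depends_upto m F \<longleftrightarrow>
     (\<forall>x t w w'. (\<forall>k\<le>m. w k = w' k) \<longrightarrow> F x t w = F x t w')"

text \<open>F is a (complex-)analytic function of x, t, v_0, ..., v_m on the open set U
of the jet space: it depends only on these finitely many coordinates, is continuous on U
and is holomorphic in each variable separately (by Osgood's lemma this is joint
holomorphy in the finitely many variables).\<close>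
definition jet_analytic :: "nat \<Rightarrow> jfun \<Rightarrow> (complex \<times> complex \<times> (nat \<Rightarrow> complex)) set \<Rightarrow> bool" where
  "jet_analytic m F U \<longleftrightarrow>
     open U \<and> depends_upto m F \<and>
     continuous_on U (\<lambda>(x, t, w). F x t w) \<and>
     (\<forall>x t w. (x, t, w) \<in> U \<longrightarrow>
        (\<lambda>y. F y t w) holomorphic_on {y. (y, t, w) \<in> U} \<and>
        (\<lambda>s. F x s w) holomorphic_on {s. (x, s, w) \<in> U} \<and>
        (\<forall>k. (\<lambda>z. F x t (w(k := z))) holomorphic_on {z. (x, t, w(k := z)) \<in> U}))"

text \<open>Total x-derivative D_x, truncated at v_N (exact for functions depending only on
v_0, ..., v_(N-1)).\<close>
definition Dx :: "nat \<Rightarrow> jfun \<Rightarrow> jfun" where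
  "Dx N F = (\<lambda>x t w. dX F x t w + (\<Sum>k<N. w (Suc k) * dV k F x t w))"

text \<open>Total t-derivative of F by virtue of the evolution equation v_t = R:
D_t F = F_t + sum_k D_x^k(R) * dF/dv_k  (truncated at N).\<close>
definition Dt_evol :: "nat \<Rightarrow> jfun \<Rightarrow> jfun \<Rightarrow> jfun" where
  "Dt_evol N R F = (\<lambda>x t w. dT F x t w + (\<Sum>k<N. (Dx N ^^ k) R x t w * dV k F x t w))"

end

theory Submission
  imports Defs "HOL-Complex_Analysis.Complex_Analysis"
begin


definition indep :: "nat \<Rightarrow> jfun \<Rightarrow> bool" where
  "indep j F \<longleftrightarrow> (\<forall>x t w z. F x t (w(j := z)) = F x t w)"

lemma dep_indep: "depends_upto m F \<Longrightarrow> m < j \<Longrightarrow> indep j F"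
  unfolding depends_upto_def indep_def by auto

lemma dep_mono: "depends_upto m F \<Longrightarrow> m \<le> m' \<Longrightarrow> depends_upto m' F"
  unfolding depends_upto_def by auto

lemma dV_zero: "depends_upto m F \<Longrightarrow> m < k \<Longrightarrow> dV k F x t w = 0"
proof -
  assume a: "depends_upto m F" "m < k"
  have "(\<lambda>z. F x t (w(k := z))) = (\<lambda>z. F x t w)"
    using a unfolding depends_upto_def by (intro ext) auto
  then show ?thesis unfolding dV_def by simp
qed

lemma dep_dX: "depends_upto m F \<Longrightarrow> depends_upto m (dX F)"
proof -
  assume a: "depends_upto m F"
  show ?thesis unfolding depends_upto_def dX_def
  proof (intro allI impI)
    fix x t :: complex and w w' :: "nat \<Rightarrow> complex" assume h: "\<forall>k\<le>m. w k = w' k"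
    have "(\<lambda>y. F y t w) = (\<lambda>y. F y t w')" using a h unfolding depends_upto_def by blast
    then show "deriv (\<lambda>y. F y t w) x = deriv (\<lambda>y. F y t w') x" by simp
  qed
qed

lemma dep_dT: "depends_upto m F \<Longrightarrow> depends_upto m (dT F)"
proof -
  assume a: "depends_upto m F"
  show ?thesis unfolding depends_upto_def dT_def
  proof (intro allI impI)
    fix x t :: complex and w w' :: "nat \<Rightarrow> complex" assume h: "\<forall>k\<le>m. w k = w' k"
    have "(\<lambda>y. F x y w) = (\<lambda>y. F x y w')" using a h unfolding depends_upto_def by blast
    then show "deriv (\<lambda>y. F x y w) t = deriv (\<lambda>y. F x y w') t" by simp
  qed
qed

lemma dep_dV: "depends_upto m F \<Longrightarrow> depends_upto m (dV k F)"
proof (cases "m < k")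
  case True
  assume a: "depends_upto m F"
  show ?thesis using dV_zero[OF a True] unfolding depends_upto_def by simp
next
  case False
  assume a: "depends_upto m F"
  show ?thesis unfolding depends_upto_def dV_def
  proof (intro allI impI)
    fix x t :: complex and w w' :: "nat \<Rightarrow> complex" assume h: "\<forall>k\<le>m. w k = w' k"
    have "(\<lambda>z. F x t (w(k := z))) = (\<lambda>z. F x t (w'(k := z)))"
      using a h unfolding depends_upto_def by (intro ext) auto
    moreover have "w k = w' k" using h False by auto
    ultimately show "deriv (\<lambda>z. F x t (w(k := z))) (w k) = deriv (\<lambda>z. F x t (w'(k := z))) (w' k)"
      by simp
  qed
qed

lemma Dx_split:
  assumes "depends_upto m F" "m < N"
  shows "Dx N F x t w = (dX F x t w + (\<Sum>j<m. w (Suc j) * dV j F x t w)) + w (Suc m) * dV m F x t w"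
proof -
  have "(\<Sum>k<N. w (Suc k) * dV k F x t w) = (\<Sum>k<Suc m. w (Suc k) * dV k F x t w)"
    using assms by (intro sum.mono_neutral_right) (auto simp: dV_zero)
  then show ?thesis unfolding Dx_def by simp
qed

lemma dV_affine:
  assumes "indep j P" "indep j G" "\<And>x t w. F x t w = P x t w + w j * G x t w"
  shows "dV j F x t w = G x t w"
proof -
  have "(\<lambda>z. F x t (w(j := z))) = (\<lambda>z. P x t w + z * G x t w)"
    using assms unfolding indep_def by (intro ext) (metis fun_upd_same)
  moreover have "((\<lambda>z. P x t w + z * G x t w) has_field_derivative G x t w) (at (w j))"
    by (auto intro!: derivative_eq_intros)
  ultimately show ?thesis unfolding dV_def by (simp add: DERIV_imp_deriv)
qed

lemma dep_bracket:
  assumes "depends_upto m F"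
  shows "depends_upto m (\<lambda>x t w. dX F x t w + (\<Sum>j<m. w (Suc j) * dV j F x t w))"
  unfolding depends_upto_def
proof (intro allI impI)
  fix x t :: complex and w w' :: "nat \<Rightarrow> complex" assume h: "\<forall>i\<le>m. w i = w' i"
  have "dX F x t w = dX F x t w'" using dep_dX[OF assms] h unfolding depends_upto_def by blast
  moreover have "(\<Sum>j<m. w (Suc j) * dV j F x t w) = (\<Sum>j<m. w' (Suc j) * dV j F x t w')"
  proof (intro sum.cong refl)
    fix j assume "j \<in> {..<m}"
    then show "w (Suc j) * dV j F x t w = w' (Suc j) * dV j F x t w'"
      using h dep_dV[OF assms, of j] unfolding depends_upto_def by auto
  qed
  ultimately show "dX F x t w + (\<Sum>j<m. w (Suc j) * dV j F x t w) =
         dX F x t w' + (\<Sum>j<m. w' (Suc j) * dV j F x t w')" by simp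
qed

lemma Dx_struct:
  assumes "depends_upto m F" "1 \<le> k" "m + k \<le> N"
  shows "\<exists>P. depends_upto (m + k - 1) P \<and>
     (\<forall>x t w. (Dx N ^^ k) F x t w = P x t w + w (m + k) * dV m F x t w)"
  using assms(2,3)
proof (induction k rule: dec_induct)
  case base
  show ?case
  proof (rule exI[of _ "\<lambda>x t w. dX F x t w + (\<Sum>j<m. w (Suc j) * dV j F x t w)"], intro conjI allI)
    show "depends_upto (m + 1 - 1) (\<lambda>x t w. dX F x t w + (\<Sum>j<m. w (Suc j) * dV j F x t w))"
      using dep_bracket[OF assms(1)] by simp
    fix x t w
    have "m < N" using base by simp
    from Dx_split[OF assms(1) this, of x t w]
    show "(Dx N ^^ 1) F x t w = dX F x t w + (\<Sum>j<m. w (Suc j) * dV j F x t w) + w (m + 1) * dV m F x t w"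
      by simp
  qed
next
  case (step k)
  have mk: "m + k < N" using step.prems by simp
  then have "m + k \<le> N" by simp
  with step.IH obtain P where P: "depends_upto (m + k - 1) P"
     "\<And>x t w. (Dx N ^^ k) F x t w = P x t w + w (m + k) * dV m F x t w" by blast
  define G where "G = (Dx N ^^ k) F"
  have depG: "depends_upto (m + k) G"
    unfolding G_def depends_upto_def
  proof (intro allI impI)
    fix x t :: complex and w w' :: "nat \<Rightarrow> complex" assume h: "\<forall>i\<le>m + k. w i = w' i"
    have "P x t w = P x t w'" using P(1) h unfolding depends_upto_def by auto
    moreover have "dV m F x t w = dV m F x t w'" using dep_dV[OF assms(1)] h unfolding depends_upto_def by auto
    ultimately show "(Dx N ^^ k) F x t w = (Dx N ^^ k) F x t w'" using P(2) h by simp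
  qed
  have dVG: "dV (m + k) G x t w = dV m F x t w" for x t w
    apply (rule dV_affine[where P = P])
    subgoal using P(1) step.hyps(1) by (intro dep_indep[of "m + k - 1"]) auto
    subgoal using dep_dV[OF assms(1)] step.hyps(1) by (intro dep_indep[of m]) auto
    subgoal using P(2) G_def by auto
    done
  show ?case
  proof (rule exI[of _ "\<lambda>x t w. dX G x t w + (\<Sum>j<m+k. w (Suc j) * dV j G x t w)"], intro conjI allI)
    show "depends_upto (m + Suc k - 1) (\<lambda>x t w. dX G x t w + (\<Sum>j<m+k. w (Suc j) * dV j G x t w))"
      using dep_bracket[OF depG] by simp
    fix x t w
    have "(Dx N ^^ Suc k) F x t w = Dx N G x t w" unfolding G_def by simp
    also have "\<dots> = dX G x t w + (\<Sum>j<m+k. w (Suc j) * dV j G x t w) + w (Suc (m + k)) * dV (m + k) G x t w"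
      by (rule Dx_split[OF depG mk])
    also have "\<dots> = dX G x t w + (\<Sum>j<m+k. w (Suc j) * dV j G x t w) + w (m + Suc k) * dV m F x t w"
      by (simp add: dVG)
    finally show "(Dx N ^^ Suc k) F x t w = dX G x t w + (\<Sum>j<m+k. w (Suc j) * dV j G x t w) + w (m + Suc k) * dV m F x t w" .
  qed
qed

lemma Dx_dep:
  assumes "depends_upto m F" "m + k \<le> N"
  shows "depends_upto (m + k) ((Dx N ^^ k) F)"
proof (cases "k = 0")
  case True then show ?thesis using assms by simp
next
  case False
  then obtain P where P: "depends_upto (m + k - 1) P"
     "\<And>x t w. (Dx N ^^ k) F x t w = P x t w + w (m + k) * dV m F x t w"
    using Dx_struct[OF assms(1) _ assms(2)] by auto
  show ?thesis unfolding depends_upto_def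
  proof (intro allI impI)
    fix x t :: complex and w w' :: "nat \<Rightarrow> complex" assume h: "\<forall>i\<le>m + k. w i = w' i"
    have "P x t w = P x t w'" using P(1) h unfolding depends_upto_def by auto
    moreover have "dV m F x t w = dV m F x t w'" using dep_dV[OF assms(1)] h unfolding depends_upto_def by auto
    ultimately show "(Dx N ^^ k) F x t w = (Dx N ^^ k) F x t w'" using P(2) h by simp
  qed
qed



lemma deriv_const_on_open:
  fixes f :: "complex \<Rightarrow> complex"
  assumes "(f has_field_derivative D) (at z)" "open Om" "z \<in> Om" "\<And>y. y \<in> Om \<Longrightarrow> f y = c"
  shows "D = 0"
proof -
  have "((\<lambda>y. c) has_field_derivative D) (at z)"
    by (rule has_field_derivative_transform_within_open[OF assms(1-3)]) (simp add: assms(4))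
  then show ?thesis using DERIV_const DERIV_unique by blast
qed

lemma dense_zero:
  fixes f h :: "complex \<Rightarrow> complex"
  assumes hol: "f holomorphic_on Om" and Om: "open Om" "connected Om" and z0: "z0 \<in> Om" "f z0 \<noteq> 0"
    and hc: "continuous_on Om h" and fh: "\<And>z. z \<in> Om \<Longrightarrow> f z \<noteq> 0 \<Longrightarrow> h z = 0"
    and z: "z \<in> Om"
  shows "h z = 0"
proof (rule ccontr)
  assume hz: "h z \<noteq> 0"
  have "isCont h z" using hc Om(1) z continuous_on_eq_continuous_at by blast
  then obtain e where e: "e > 0" "\<And>y. dist z y < e \<Longrightarrow> h y \<noteq> 0"
    using continuous_at_avoid[where f=h and x=z and a=0] hz by blast
  define V where "V = ball z e"
  have V: "open V" "z \<in> V" "\<And>y. y \<in> V \<Longrightarrow> h y \<noteq> 0" using e unfolding V_def by auto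
  have "f z0 = 0"
  proof (rule analytic_continuation[OF hol Om(1) Om(2), of "V \<inter> Om" z])
    show "V \<inter> Om \<subseteq> Om" by auto
    show "z \<in> Om" by fact
    show "z islimpt V \<inter> Om" using V Om z by (intro open_imp_islimpt) auto
    show "\<And>y. y \<in> V \<inter> Om \<Longrightarrow> f y = 0" using fh V(3) by blast
    show "z0 \<in> Om" by fact
  qed
  then show False using z0 by simp
qed

lemma coeff:
  assumes sl: "open {z. (x, t, w(j := z)) \<in> C}" and p: "(x, t, w) \<in> C"
    and ind: "indep j A" "indep j B" "indep j A'" "indep j B'"
    and eq: "\<And>x t w. (x, t, w) \<in> C \<Longrightarrow> A x t w + w j * B x t w = A' x t w + w j * B' x t w"
  shows "B x t w = B' x t w"
proof -
  have "w j \<in> {z. (x, t, w(j := z)) \<in> C}" using p by simp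
  then obtain e where e: "e > 0" "ball (w j) e \<subseteq> {z. (x, t, w(j := z)) \<in> C}"
    using sl openE by blast
  define z where "z = w j + of_real (e / 2)"
  have "z \<in> ball (w j) e" using e unfolding z_def by (simp add: dist_norm)
  then have zC: "(x, t, w(j := z)) \<in> C" using e by auto
  have zne: "z \<noteq> w j" using e unfolding z_def by simp
  have 1: "A x t w + w j * B x t w = A' x t w + w j * B' x t w" using eq p by blast
  have "A x t (w(j:=z)) + (w(j:=z)) j * B x t (w(j:=z)) = A' x t (w(j:=z)) + (w(j:=z)) j * B' x t (w(j:=z))"
    using eq zC by blast
  then have 2: "A x t w + z * B x t w = A' x t w + z * B' x t w"
    using ind unfolding indep_def by simp
  have "(w j - z) * (B x t w - B' x t w) = (A x t w + w j * B x t w - (A' x t w + w j * B' x t w)) - (A x t w + z * B x t w - (A' x t w + z * B' x t w))"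
    by (simp add: algebra_simps)
  also have "\<dots> = 0" using 1 2 by simp
  finally have "(w j - z) * (B x t w - B' x t w) = 0" .
  with zne show ?thesis by simp
qed

lemma loc_Dx:
  assumes slx: "\<And>x t w. (x, t, w) \<in> C \<Longrightarrow> open {y. (y, t, w) \<in> C}"
    and slw: "\<And>x t w k. (x, t, w) \<in> C \<Longrightarrow> open {z. (x, t, w(k := z)) \<in> C}"
    and eq: "\<And>x t w. (x, t, w) \<in> C \<Longrightarrow> F x t w = G x t w"
    and p: "(x, t, w) \<in> C"
  shows "Dx N F x t w = Dx N G x t w"
proof -
  have "dX F x t w = dX G x t w"
    unfolding dX_def
  proof (rule deriv_cong_ev[OF _ refl])
    show "\<forall>\<^sub>F y in nhds x. F y t w = G y t w"
      unfolding eventually_nhds using slx[OF p] p eq by (intro exI[of _ "{y. (y, t, w) \<in> C}"]) auto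
  qed
  moreover have "dV k F x t w = dV k G x t w" for k
    unfolding dV_def
  proof (rule deriv_cong_ev[OF _ refl])
    show "\<forall>\<^sub>F z in nhds (w k). F x t (w(k := z)) = G x t (w(k := z))"
      unfolding eventually_nhds using slw[OF p] p eq by (intro exI[of _ "{z. (x, t, w(k := z)) \<in> C}"]) auto
  qed
  ultimately show ?thesis unfolding Dx_def by simp
qed

lemma loc_Dx_pow:
  assumes slx: "\<And>x t w. (x, t, w) \<in> C \<Longrightarrow> open {y. (y, t, w) \<in> C}"
    and slw: "\<And>x t w k. (x, t, w) \<in> C \<Longrightarrow> open {z. (x, t, w(k := z)) \<in> C}"
    and eq: "\<And>x t w. (x, t, w) \<in> C \<Longrightarrow> F x t w = G x t w"
  shows "(x, t, w) \<in> C \<Longrightarrow> (Dx N ^^ k) F x t w = (Dx N ^^ k) G x t w"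
proof (induction k arbitrary: x t w)
  case 0 then show ?case using eq by simp
next
  case (Suc k)
  show ?case using loc_Dx[where F="(Dx N ^^ k) F" and G = "(Dx N ^^ k) G", OF slx slw Suc.IH Suc.prems] by auto
qed

lemma dep_add: "depends_upto m F \<Longrightarrow> depends_upto m G \<Longrightarrow> depends_upto m (\<lambda>x t w. F x t w + G x t w)"
  unfolding depends_upto_def by (intro allI impI) (metis (no_types))
lemma dep_mult: "depends_upto m F \<Longrightarrow> depends_upto m G \<Longrightarrow> depends_upto m (\<lambda>x t w. F x t w * G x t w)"
  unfolding depends_upto_def by (intro allI impI) (metis (no_types))
lemma dep_sum: "(\<And>k. k \<in> K \<Longrightarrow> depends_upto m (F k)) \<Longrightarrow> depends_upto m (\<lambda>x t w. \<Sum>k\<in>K. F k x t w)"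
  unfolding depends_upto_def
proof (intro allI impI)
  fix x t :: complex and w w' :: "nat \<Rightarrow> complex" assume a: "\<And>k. k \<in> K \<Longrightarrow> \<forall>x t w w'. (\<forall>k\<le>m. w k = w' k) \<longrightarrow> F k x t w = F k x t w'"
    and h: "\<forall>k\<le>m. w k = w' k"
  show "(\<Sum>k\<in>K. F k x t w) = (\<Sum>k\<in>K. F k x t w')"
    using a h by (intro sum.cong refl) blast
qed
lemma dep_comp: "depends_upto m F \<Longrightarrow> depends_upto m (\<lambda>x t w. g (F x t w))"
  unfolding depends_upto_def by (intro allI impI) (metis (no_types))

lemma lhs_decomp:
  assumes dS: "depends_upto n S" and dR: "depends_upto m R" and n1: "1 \<le> n" and m1: "1 \<le> m"
    and N: "n + m \<le> N"
  shows "\<exists>A. depends_upto (n + m - 1) A \<and>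
     (\<forall>x t w. Dt_evol N R S x t w = A x t w + w (n + m) * (dV m R x t w * dV n S x t w))"
proof -
  obtain P where P: "depends_upto (m + n - 1) P"
     "\<And>x t w. (Dx N ^^ n) R x t w = P x t w + w (m + n) * dV m R x t w"
    using Dx_struct[OF dR n1, of N] N by (auto simp: add.commute)
  define A where "A = (\<lambda>x t w. dT S x t w + (\<Sum>k<n. (Dx N ^^ k) R x t w * dV k S x t w) + P x t w * dV n S x t w)"
  have "depends_upto (n + m - 1) A"
    unfolding A_def
  proof (intro dep_add dep_mult dep_sum)
    show "depends_upto (n + m - 1) (dT S)" using dep_mono[OF dep_dT[OF dS]] m1 by simp
    show "depends_upto (n + m - 1) P" using P(1) by (simp add: add.commute)
    show "depends_upto (n + m - 1) (dV n S)" using dep_mono[OF dep_dV[OF dS]] m1 by simp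
    fix k assume k: "k \<in> {..<n}"
    show "depends_upto (n + m - 1) (dV k S)"
      by (rule dep_mono[OF dep_dV[OF dS]]) (use m1 in simp)
    have "depends_upto (m + k) ((Dx N ^^ k) R)" by (rule Dx_dep[OF dR]) (use k N in simp)
    then show "depends_upto (n + m - 1) ((Dx N ^^ k) R)"
      by (rule dep_mono) (use k in simp)
  qed
  moreover have "Dt_evol N R S x t w = A x t w + w (n + m) * (dV m R x t w * dV n S x t w)" for x t w
  proof -
    have "(\<Sum>k<N. (Dx N ^^ k) R x t w * dV k S x t w) = (\<Sum>k<Suc n. (Dx N ^^ k) R x t w * dV k S x t w)"
      using N m1 by (intro sum.mono_neutral_right) (auto simp: dV_zero[OF dS])
    then have "Dt_evol N R S x t w = dT S x t w + (\<Sum>k<n. (Dx N ^^ k) R x t w * dV k S x t w) + (Dx N ^^ n) R x t w * dV n S x t w"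
      unfolding Dt_evol_def by (simp add: add.assoc)
    also have "\<dots> = dT S x t w + (\<Sum>k<n. (Dx N ^^ k) R x t w * dV k S x t w) + (P x t w + w (m + n) * dV m R x t w) * dV n S x t w"
      by (simp only: P(2))
    also have "\<dots> = A x t w + w (n + m) * (dV m R x t w * dV n S x t w)"
      unfolding A_def by (simp only: distrib_right add.assoc mult.assoc add.commute[of m n])
    finally show ?thesis .
  qed
  ultimately show ?thesis by blast
qed

lemma rhs_decomp:
  assumes dS: "depends_upto n S" and N: "n + 5 \<le> N"
  shows "\<exists>Q. depends_upto (n + 4) Q \<and>
     (\<forall>x t w. S x t w powr (5/2) * (Dx N ^^ 5) S x t w = Q x t w + w (n + 5) * (S x t w powr (5/2) * dV n S x t w))"
proof -
  obtain P where P: "depends_upto (n + 5 - 1) P"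
     "\<And>x t w. (Dx N ^^ 5) S x t w = P x t w + w (n + 5) * dV n S x t w"
    using Dx_struct[OF dS _ N] by auto
  show ?thesis
  proof (rule exI[of _ "\<lambda>x t w. S x t w powr (5/2) * P x t w"], intro conjI allI)
    show "depends_upto (n + 4) (\<lambda>x t w. S x t w powr (5/2) * P x t w)"
      unfolding depends_upto_def
    proof (intro allI impI)
      fix x t :: complex and w w' :: "nat \<Rightarrow> complex" assume h: "\<forall>k\<le>n + 4. w k = w' k"
      have "S x t w = S x t w'" using dS h unfolding depends_upto_def by auto
      moreover have "P x t w = P x t w'" using P(1) h unfolding depends_upto_def by simp
      ultimately show "S x t w powr (5/2) * P x t w = S x t w' powr (5/2) * P x t w'" by simp
    qed
    fix x t w
    show "S x t w powr (5/2) * (Dx N ^^ 5) S x t w = S x t w powr (5/2) * P x t w + w (n + 5) * (S x t w powr (5/2) * dV n S x t w)"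
      unfolding P(2) by (simp only: distrib_left mult.left_commute)
  qed
qed

lemma rhs_dep:
  assumes dS: "depends_upto n S" and N: "n + 5 \<le> N"
  shows "depends_upto (n + 5) (\<lambda>x t w. S x t w powr (5/2) * (Dx N ^^ 5) S x t w)"
  unfolding depends_upto_def
proof (intro allI impI)
  fix x t :: complex and w w' :: "nat \<Rightarrow> complex" assume h: "\<forall>k\<le>n + 5. w k = w' k"
  have "S x t w = S x t w'" using dS h unfolding depends_upto_def by auto
  moreover have "(Dx N ^^ 5) S x t w = (Dx N ^^ 5) S x t w'" using Dx_dep[OF dS N] h unfolding depends_upto_def by blast
  ultimately show "S x t w powr (5/2) * (Dx N ^^ 5) S x t w = S x t w' powr (5/2) * (Dx N ^^ 5) S x t w'" by simp
qed



lemma powr_52_sq: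
  fixes a :: complex
  shows "(a powr (5/2)) ^ 2 = a ^ 5"
proof (cases "a = 0")
  case True then show ?thesis by simp
next
  case False
  have "(a powr (5/2)) ^ 2 = exp (5/2 * ln a) ^ 2" using False by (simp add: powr_def)
  also have "\<dots> = exp (of_nat 2 * (5/2 * ln a))" by (simp only: exp_of_nat_mult)
  also have "\<dots> = exp (of_nat 5 * ln a)" by simp
  also have "\<dots> = exp (ln a) ^ 5" by (simp only: exp_of_nat_mult)
  also have "\<dots> = a ^ 5" using False by simp
  finally show ?thesis .
qed

locale core =
  fixes S :: jfun and n N :: nat and C :: "(complex \<times> complex \<times> (nat \<Rightarrow> complex)) set"
    and c :: "nat \<Rightarrow> complex" and x0 t0 :: complex and w0 :: "nat \<Rightarrow> complex"
  assumes n6: "6 \<le> n"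
    and dS: "depends_upto n S"
    and HS: "\<And>x t w. (x, t, w) \<in> C \<Longrightarrow> (\<lambda>z. S x t (w(n := z))) holomorphic_on {z. (x, t, w(n := z)) \<in> C}"
    and slx: "\<And>x t w. (x, t, w) \<in> C \<Longrightarrow> open {y. (y, t, w) \<in> C}"
    and slw: "\<And>x t w k. (x, t, w) \<in> C \<Longrightarrow> open {z. (x, t, w(k := z)) \<in> C}"
    and slcv: "\<And>x t w k. (x, t, w) \<in> C \<Longrightarrow> convex {z. (x, t, w(k := z)) \<in> C}"
    and center: "\<And>x t w k. (x, t, w) \<in> C \<Longrightarrow> (x, t, w(k := c k)) \<in> C"
    and PP1: "\<And>x t w. (x, t, w) \<in> C \<Longrightarrow> \<exists>z. (x, t, w(n := z)) \<in> C \<and> dV n S x t (w(n := z)) \<noteq> 0"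
    and p0: "(x0, t0, w0) \<in> C" "dV n S x0 t0 w0 \<noteq> 0"
begin

definition HR :: "jfun \<Rightarrow> bool" where
  "HR R \<longleftrightarrow> (\<forall>x t w k. (x, t, w) \<in> C \<longrightarrow>
      (\<lambda>z. R x t (w(k := z))) holomorphic_on {z. (x, t, w(k := z)) \<in> C})"

definition ident :: "jfun \<Rightarrow> bool" where
  "ident R \<longleftrightarrow> (\<forall>x t w. (x, t, w) \<in> C \<longrightarrow>
      Dt_evol N R S x t w = S x t w powr (5 / 2) * (Dx N ^^ 5) S x t w)"

lemma const1:
  assumes hr: "HR R" and p: "(x, t, w) \<in> C"
    and d0: "\<And>y. (x, t, w(r := y)) \<in> C \<Longrightarrow> dV r R x t (w(r := y)) = 0"
  shows "R x t w = R x t (w(r := c r))"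
proof -
  define Om where "Om = {y. (x, t, w(r := y)) \<in> C}"
  define phi where "phi = (\<lambda>y. R x t (w(r := y)))"
  have hol: "phi holomorphic_on Om" using hr p unfolding HR_def phi_def Om_def by blast
  have op: "open Om" and cv: "convex Om" using slw[OF p] slcv[OF p] unfolding Om_def by auto
  have "\<exists>K. \<forall>y\<in>Om. phi y = K"
  proof (rule has_field_derivative_zero_constant[OF cv])
    fix y assume y: "y \<in> Om"
    have "(phi has_field_derivative deriv phi y) (at y within Om)"
      by (rule holomorphic_derivI[OF hol op y])
    moreover have "deriv phi y = dV r R x t (w(r := y))"
      unfolding dV_def phi_def by simp
    moreover have "dV r R x t (w(r := y)) = 0" using d0 y unfolding Om_def by simp
    ultimately show "(phi has_field_derivative 0) (at y within Om)" by simp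
  qed
  then obtain K where K: "\<And>y. y \<in> Om \<Longrightarrow> phi y = K" by blast
  have "w r \<in> Om" using p unfolding Om_def by simp
  moreover have "c r \<in> Om" using center[OF p] unfolding Om_def by simp
  ultimately have "phi (w r) = phi (c r)" using K by simp
  then show ?thesis unfolding phi_def by simp
qed

end


lemma dep_powr_mult:
  assumes "depends_upto m F" "depends_upto m G"
  shows "depends_upto m (\<lambda>x t w. F x t w powr a * G x t w)"
  unfolding depends_upto_def
proof (intro allI impI)
  fix x t :: complex and w w' :: "nat \<Rightarrow> complex" assume h: "\<forall>k\<le>m. w k = w' k"
  have "F x t w = F x t w'" using assms(1) h unfolding depends_upto_def by blast
  moreover have "G x t w = G x t w'" using assms(2) h unfolding depends_upto_def by blast
  ultimately show "F x t w powr a * G x t w = F x t w' powr a * G x t w'" by simp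
qed

context core begin

lemma base_coeff:
  assumes dR: "depends_upto 5 R" and N: "n + 6 \<le> N" and id: "ident R"
    and p: "(x, t, w) \<in> C"
  shows "dV 5 R x t w * dV n S x t w = S x t w powr (5/2) * dV n S x t w"
proof -
  have n1: "1 \<le> n" using n6 by simp
  obtain A where A: "depends_upto (n + 5 - 1) A"
     "\<And>x t w. Dt_evol N R S x t w = A x t w + w (n + 5) * (dV 5 R x t w * dV n S x t w)"
    using lhs_decomp[OF dS dR n1 _, of N] N by auto
  obtain Q where Q: "depends_upto (n + 4) Q"
     "\<And>x t w. S x t w powr (5/2) * (Dx N ^^ 5) S x t w = Q x t w + w (n + 5) * (S x t w powr (5/2) * dV n S x t w)"
    using rhs_decomp[OF dS, of N] N by auto
  show ?thesis
  proof (rule coeff[OF slw[OF p] p])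
    show "indep (n + 5) A" using A(1) by (rule dep_indep) simp
    show "indep (n + 5) Q" using Q(1) by (rule dep_indep) simp
    have "depends_upto n (\<lambda>x t w. dV 5 R x t w * dV n S x t w)"
      by (intro dep_mult dep_mono[OF dep_dV[OF dR]] dep_dV[OF dS]) (use n6 in simp)
    then show "indep (n + 5) (\<lambda>x t w. dV 5 R x t w * dV n S x t w)" by (rule dep_indep) simp
    have "depends_upto n (\<lambda>x t w. S x t w powr (5/2) * dV n S x t w)"
      by (rule dep_powr_mult[OF dS dep_dV[OF dS]])
    then show "indep (n + 5) (\<lambda>x t w. S x t w powr (5/2) * dV n S x t w)" by (rule dep_indep) simp
    fix x t w assume "(x, t, w) \<in> C"
    then show "A x t w + w (n + 5) * (dV 5 R x t w * dV n S x t w) =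
        Q x t w + w (n + 5) * (S x t w powr (5/2) * dV n S x t w)"
      using id A(2) Q(2) unfolding ident_def by metis
  qed
qed

lemma base:
  assumes dR: "depends_upto 5 R" and N: "n + 6 \<le> N" and id: "ident R"
  shows False
proof -
  define Om where "Om = {z. (x0, t0, w0(n := z)) \<in> C}"
  define g where "g = (\<lambda>z. S x0 t0 (w0(n := z)))"
  have op: "open Om" using slw[OF p0(1)] unfolding Om_def .
  have hol: "g holomorphic_on Om" using HS[OF p0(1)] unfolding g_def Om_def .
  have c0: "w0 n \<in> Om" using p0(1) unfolding Om_def by simp
  have fz: "deriv g z = dV n S x0 t0 (w0(n := z))" for z unfolding g_def dV_def by simp
  have f0: "deriv g (w0 n) \<noteq> 0" using p0(2) fz[of "w0 n"] by simp
  have "continuous_on Om (deriv g)" using holomorphic_deriv[OF hol op] holomorphic_on_imp_continuous_on by blast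
  then have "isCont (deriv g) (w0 n)" using op c0 continuous_on_eq_continuous_at by blast
  then obtain e where e: "e > 0" "\<And>y. dist (w0 n) y < e \<Longrightarrow> deriv g y \<noteq> 0"
    using continuous_at_avoid[where f="deriv g" and x="w0 n" and a=0] f0 by blast
  define Om' where "Om' = Om \<inter> ball (w0 n) e"
  have op': "open Om'" using op unfolding Om'_def by auto
  have c0': "w0 n \<in> Om'" using c0 e unfolding Om'_def by auto
  define K where "K = dV 5 R x0 t0 w0"
  have indR: "indep n (dV 5 R)" using dep_dV[OF dR] n6 by (intro dep_indep) auto
  have gK: "g z powr (5/2) = K" if z: "z \<in> Om'" for z
  proof -
    have zC: "(x0, t0, w0(n := z)) \<in> C" using z unfolding Om'_def Om_def by auto
    have "deriv g z \<noteq> 0" using z e unfolding Om'_def by auto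
    then have nz: "dV n S x0 t0 (w0(n := z)) \<noteq> 0" using fz by simp
    have "dV 5 R x0 t0 (w0(n := z)) * dV n S x0 t0 (w0(n := z)) = S x0 t0 (w0(n := z)) powr (5/2) * dV n S x0 t0 (w0(n := z))"
      by (rule base_coeff[OF dR N id zC])
    with nz have "S x0 t0 (w0(n := z)) powr (5/2) = dV 5 R x0 t0 (w0(n := z))" by simp
    also have "\<dots> = K" using indR unfolding indep_def K_def by simp
    finally show ?thesis unfolding g_def .
  qed
  have g5: "g z ^ 5 = K ^ 2" if "z \<in> Om'" for z
    using gK[OF that] powr_52_sq[of "g z"] by simp
  have "((\<lambda>z. g z ^ 5) has_field_derivative (of_nat 5 * g (w0 n) ^ 4 * deriv g (w0 n))) (at (w0 n))"
    using holomorphic_derivI[OF hol op c0, of UNIV]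
    by (auto intro!: derivative_eq_intros)
  then have "of_nat 5 * g (w0 n) ^ 4 * deriv g (w0 n) = 0"
    by (rule deriv_const_on_open[OF _ op' c0' g5])
  then have g0: "g (w0 n) = 0" using f0 by simp
  then have "K = 0" using g5[OF c0'] by simp
  then have gz: "g z = 0" if "z \<in> Om'" for z using g5[OF that] by simp
  have "deriv g (w0 n) = 0"
    by (rule deriv_const_on_open[OF holomorphic_derivI[OF hol op c0, of UNIV] op' c0' gz]) simp
  with f0 show False by simp
qed

end


context core begin

lemma step_E1:
  assumes dR: "depends_upto r R" and r6: "6 \<le> r" and N: "n + r + 6 \<le> N" and id: "ident R"
    and p: "(x, t, w) \<in> C"
  shows "dV r R x t w * dV n S x t w = 0"
proof -
  have n1: "1 \<le> n" using n6 by simp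
  obtain A where A: "depends_upto (n + r - 1) A"
     "\<And>x t w. Dt_evol N R S x t w = A x t w + w (n + r) * (dV r R x t w * dV n S x t w)"
    using lhs_decomp[OF dS dR n1 _, of N] N r6 by auto
  define RH where "RH = (\<lambda>x t w. S x t w powr (5/2) * (Dx N ^^ 5) S x t w)"
  have dRH: "depends_upto (n + 5) RH" unfolding RH_def by (rule rhs_dep[OF dS]) (use N in simp)
  have iA: "indep (n + r) A" using A(1) by (rule dep_indep) (use r6 n6 in simp)
  have iRH: "indep (n + r) RH" using dRH by (rule dep_indep) (use r6 in simp)
  have i0: "indep (n + r) (\<lambda>x t w. 0)" unfolding indep_def by simp
  have "depends_upto (n + r - 1) (\<lambda>x t w. dV r R x t w * dV n S x t w)"
    by (intro dep_mult dep_mono[OF dep_dV[OF dR]] dep_mono[OF dep_dV[OF dS]]) (use n6 r6 in simp)+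
  then have iB: "indep (n + r) (\<lambda>x t w. dV r R x t w * dV n S x t w)" by (rule dep_indep) (use r6 n6 in simp)
  have eq: "A x t w + w (n + r) * (dV r R x t w * dV n S x t w) = RH x t w + w (n + r) * (\<lambda>x t w. 0) x t w"
    if "(x, t, w) \<in> C" for x t w
    using id A(2) that unfolding ident_def RH_def by simp
  have "(\<lambda>x t w. dV r R x t w * dV n S x t w) x t w = (\<lambda>x t w. 0) x t w"
    by (rule coeff[OF slw[OF p] p iA iB iRH i0 eq])
  then show ?thesis by simp
qed

lemma step_E2:
  assumes dR: "depends_upto r R" and r6: "6 \<le> r" and N: "n + r + 6 \<le> N" and id: "ident R"
    and hr: "HR R" and p: "(x, t, w) \<in> C"
  shows "R x t w = R x t (w(r := c r))"
proof -
  note E1 = step_E1[OF dR r6 N id]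
  have indSn_r: "n < r \<Longrightarrow> indep r (dV n S)" using dep_dV[OF dS] by (intro dep_indep) auto
  consider "r < n" | "r = n" | "n < r" by linarith
  then show ?thesis
  proof cases
    case 1
    have indRr: "indep n (dV r R)" using dep_dV[OF dR] 1 by (intro dep_indep) auto
    show ?thesis
    proof (rule const1[OF hr p])
      fix y assume q: "(x, t, w(r := y)) \<in> C"
      obtain z where z: "(x, t, (w(r := y))(n := z)) \<in> C" "dV n S x t ((w(r := y))(n := z)) \<noteq> 0"
        using PP1[OF q] by blast
      have "dV r R x t ((w(r := y))(n := z)) = 0" using E1[OF z(1)] z(2) by simp
      then show "dV r R x t (w(r := y)) = 0" using indRr unfolding indep_def by simp
    qed
  next
    case 2
    show ?thesis
    proof (rule const1[OF hr p])
      fix y assume q: "(x, t, w(r := y)) \<in> C"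
      define v where "v = w(r := y)"
      have qv: "(x, t, v) \<in> C" using q unfolding v_def .
      define Om where "Om = {z. (x, t, v(n := z)) \<in> C}"
      define gS where "gS = (\<lambda>z. S x t (v(n := z)))"
      define gR where "gR = (\<lambda>z. R x t (v(n := z)))"
      have op: "open Om" using slw[OF qv] unfolding Om_def .
      have cn: "connected Om" using slcv[OF qv] convex_connected unfolding Om_def by blast
      have hS: "gS holomorphic_on Om" using HS[OF qv] unfolding gS_def Om_def .
      have hR: "gR holomorphic_on Om" using hr qv unfolding HR_def gR_def Om_def by blast
      obtain z0 where z0: "(x, t, v(n := z0)) \<in> C" "dV n S x t (v(n := z0)) \<noteq> 0"
        using PP1[OF qv] by blast
      have dS': "dV n S x t (v(n := z)) = deriv gS z" for z unfolding gS_def dV_def by simp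
      have dR': "dV n R x t (v(n := z)) = deriv gR z" for z unfolding gR_def dV_def by simp
      have "deriv gR (v n) = 0"
      proof (rule dense_zero[where h="deriv gR" and z="v n", OF holomorphic_deriv[OF hS op] op cn])
        show "z0 \<in> Om" using z0 unfolding Om_def by simp
        show "deriv gS z0 \<noteq> 0" using z0 dS' by simp
        show "continuous_on Om (deriv gR)"
          using holomorphic_deriv[OF hR op] holomorphic_on_imp_continuous_on by blast
        show "v n \<in> Om" using qv unfolding Om_def by simp
        fix z assume "z \<in> Om" "deriv gS z \<noteq> 0"
        then show "deriv gR z = 0" using E1[of x t "v(n := z)"] dS' dR' 2 unfolding Om_def by simp
      qed
      then show "dV r R x t (w(r := y)) = 0" using dR'[of "v n"] 2 unfolding v_def by simp
    qed
  next
    case 3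
    define Om where "Om = {z. (x, t, w(n := z)) \<in> C}"
    define gS where "gS = (\<lambda>z. S x t (w(n := z)))"
    define h where "h = (\<lambda>z. R x t (w(n := z)) - R x t ((w(r := c r))(n := z)))"
    have op: "open Om" using slw[OF p] unfolding Om_def .
    have cn: "connected Om" using slcv[OF p] convex_connected unfolding Om_def by blast
    have hS: "gS holomorphic_on Om" using HS[OF p] unfolding gS_def Om_def .
    have pc: "(x, t, w(r := c r)) \<in> C" using center[OF p] .
    have sub: "Om \<subseteq> {z. (x, t, (w(r := c r))(n := z)) \<in> C}"
      unfolding Om_def using center 3 by (auto simp: fun_upd_twist)
    have h1: "(\<lambda>z. R x t (w(n := z))) holomorphic_on Om" using hr p unfolding HR_def Om_def by blast
    have h2: "(\<lambda>z. R x t ((w(r := c r))(n := z))) holomorphic_on Om"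
      using hr pc sub unfolding HR_def by (meson holomorphic_on_subset)
    have hc: "continuous_on Om h" unfolding h_def
      by (intro continuous_intros holomorphic_on_imp_continuous_on h1 h2)
    obtain z0 where z0: "(x, t, w(n := z0)) \<in> C" "dV n S x t (w(n := z0)) \<noteq> 0"
      using PP1[OF p] by blast
    have dS': "dV n S x t (w(n := z)) = deriv gS z" for z unfolding gS_def dV_def by simp
    have "h (w n) = 0"
    proof (rule dense_zero[where h=h and z="w n", OF holomorphic_deriv[OF hS op] op cn _ _ hc])
      show "z0 \<in> Om" using z0 unfolding Om_def by simp
      show "deriv gS z0 \<noteq> 0" using z0 dS' by simp
      show "w n \<in> Om" using p unfolding Om_def by simp
      fix z assume zO: "z \<in> Om" and nz: "deriv gS z \<noteq> 0"
      have qz: "(x, t, w(n := z)) \<in> C" using zO unfolding Om_def by simp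
      have "R x t (w(n := z)) = R x t ((w(n := z))(r := c r))"
      proof (rule const1[OF hr qz])
        fix y assume qy: "(x, t, (w(n := z))(r := y)) \<in> C"
        have "dV n S x t ((w(n := z))(r := y)) = dV n S x t (w(n := z))"
          using indSn_r[OF 3] unfolding indep_def by simp
        also have "\<dots> \<noteq> 0" using nz dS' by simp
        finally show "dV r R x t ((w(n := z))(r := y)) = 0" using E1[OF qy] by simp
      qed
      then show "h z = 0" unfolding h_def using 3 by (simp add: fun_upd_twist)
    qed
    moreover have "(w(r := c r))(n := w n) = w(r := c r)" using 3 by (intro ext) auto
    ultimately show ?thesis unfolding h_def by simp
  qed
qed

end


context core begin

lemma step:
  assumes dR: "depends_upto r R" and r6: "6 \<le> r" and N: "n + r + 6 \<le> N" and id: "ident R"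
    and hr: "HR R"
  shows "depends_upto (r - 1) (\<lambda>x t w. R x t (w(r := c r))) \<and> HR (\<lambda>x t w. R x t (w(r := c r)))
     \<and> ident (\<lambda>x t w. R x t (w(r := c r)))"
proof (intro conjI)
  define R' where "R' = (\<lambda>x t w. R x t (w(r := c r)))"
  show "depends_upto (r - 1) (\<lambda>x t w. R x t (w(r := c r)))"
    unfolding depends_upto_def
  proof (intro allI impI)
    fix x t :: complex and w w' :: "nat \<Rightarrow> complex" assume h: "\<forall>k\<le>r - 1. w k = w' k"
    have "\<forall>k\<le>r. (w(r := c r)) k = (w'(r := c r)) k" using h r6 by auto
    then show "R x t (w(r := c r)) = R x t (w'(r := c r))" using dR unfolding depends_upto_def by blast
  qed
  show "HR (\<lambda>x t w. R x t (w(r := c r)))"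
    unfolding HR_def
  proof (intro allI impI)
    fix x t w k assume p: "(x, t, w) \<in> C"
    show "(\<lambda>z. R x t ((w(k := z))(r := c r))) holomorphic_on {z. (x, t, w(k := z)) \<in> C}"
    proof (cases "k = r")
      case True
      then show ?thesis by simp
    next
      case False
      have pc: "(x, t, w(r := c r)) \<in> C" using center[OF p] .
      have sub: "{z. (x, t, w(k := z)) \<in> C} \<subseteq> {z. (x, t, (w(r := c r))(k := z)) \<in> C}"
        using center False by (auto simp: fun_upd_twist)
      have "(\<lambda>z. R x t ((w(r := c r))(k := z))) holomorphic_on {z. (x, t, (w(r := c r))(k := z)) \<in> C}"
        using hr pc unfolding HR_def by blast
      then have "(\<lambda>z. R x t ((w(r := c r))(k := z))) holomorphic_on {z. (x, t, w(k := z)) \<in> C}"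
        using sub by (rule holomorphic_on_subset)
      moreover have "(\<lambda>z. R x t ((w(k := z))(r := c r))) = (\<lambda>z. R x t ((w(r := c r))(k := z)))"
        using False by (simp add: fun_upd_twist)
      ultimately show ?thesis by simp
    qed
  qed
  have eqR: "R' x t w = R x t w" if "(x, t, w) \<in> C" for x t w
    unfolding R'_def using step_E2[OF dR r6 N id hr that] by simp
  have "ident R'"
    unfolding ident_def
  proof (intro allI impI)
    fix x t w assume p: "(x, t, w) \<in> C"
    have "(Dx N ^^ k) R' x t w = (Dx N ^^ k) R x t w" for k
      by (rule loc_Dx_pow[OF slx slw eqR p])
    then have "Dt_evol N R' S x t w = Dt_evol N R S x t w" unfolding Dt_evol_def by simp
    then show "Dt_evol N R' S x t w = S x t w powr (5 / 2) * (Dx N ^^ 5) S x t w"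
      using id p unfolding ident_def by simp
  qed
  then show "ident (\<lambda>x t w. R x t (w(r := c r)))" unfolding R'_def .
qed

lemma main_ind:
  "depends_upto r R \<Longrightarrow> HR R \<Longrightarrow> n + r + 6 \<le> N \<Longrightarrow> ident R \<Longrightarrow> False"
proof (induction r arbitrary: R rule: less_induct)
  case (less r)
  show ?case
  proof (cases "r \<le> 5")
    case True
    show False
      by (rule base[OF dep_mono[OF less.prems(1) True] _ less.prems(4)]) (use less.prems(3) in simp)
  next
    case False
    then have r6: "6 \<le> r" by simp
    note st = step[OF less.prems(1) r6 less.prems(3) less.prems(4) less.prems(2)]
    show False
      by (rule less.IH[of "r - 1"]) (use st r6 less.prems(3) in auto)
  qed
qed

end


lemma dist_pair_le: "dist (a, b) (c, d) \<le> dist a c + dist b d"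
proof -
  have "dist (a, b) (c, d) = sqrt ((dist a c)\<^sup>2 + (dist b d)\<^sup>2)" by (rule dist_Pair_Pair)
  also have "\<dots> \<le> sqrt ((dist a c + dist b d)\<^sup>2)"
    by (rule real_sqrt_le_mono) (simp add: power2_eq_square algebra_simps)
  also have "\<dots> = dist a c + dist b d" by simp
  finally show ?thesis .
qed

lemma dist_fun_bound:
  fixes w w' :: "nat \<Rightarrow> complex"
  assumes "\<forall>i\<in>from_nat ` {..M}. dist (w i) (w' i) < d"
  shows "dist w w' \<le> 2 * d + (1/2)^M"
proof -
  have "dist w w' \<le> 2 * Max {dist (w (from_nat n)) (w' (from_nat n)) |n. n \<le> M} + (1/2)^M"
    by (rule dist_fun_le_dist_first_terms)
  moreover have "Max {dist (w (from_nat n)) (w' (from_nat n)) |n. n \<le> M} < d"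
  proof -
    have eq: "{dist (w (from_nat n)) (w' (from_nat n)) |n. n \<le> M} = (\<lambda>n. dist (w (from_nat n)) (w' (from_nat n))) ` {..M}"
      by auto
    show ?thesis unfolding eq using assms by (subst Max_less_iff) auto
  qed
  ultimately show ?thesis by simp
qed

lemma near:
  fixes eps :: real
  assumes "eps > 0"
  shows "\<exists>d>0. \<exists>M. \<forall>(x::complex) (t::complex) (w::nat\<Rightarrow>complex) x' t' w'. dist x x' < d \<longrightarrow> dist t t' < d \<longrightarrow>
     (\<forall>i\<in>from_nat ` {..M}. dist (w i) (w' i) < d) \<longrightarrow> dist (x, t, w) (x', t', w') < eps"
proof -
  obtain M where M: "(1/2::real)^M < eps / 4" using real_arch_pow_inv[of "eps/4" "1/2"] assms by auto
  show ?thesis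
  proof (intro exI[of _ "eps / 8"] conjI exI[of _ M] allI impI)
    show "eps / 8 > 0" using assms by simp
    fix x t x' t' :: complex and w w' :: "nat \<Rightarrow> complex"
    assume h: "dist x x' < eps / 8" "dist t t' < eps / 8" "\<forall>i\<in>from_nat ` {..M}. dist (w i) (w' i) < eps / 8"
    have dw: "dist w w' \<le> 2 * (eps / 8) + (1/2)^M" by (rule dist_fun_bound[OF h(3)])
    have "dist (x, t, w) (x', t', w') \<le> dist x x' + (dist t t' + dist w w')"
      using dist_pair_le[of x "(t, w)" x' "(t', w')"] dist_pair_le[of t w t' w'] by simp
    also have "\<dots> < eps" using h(1,2) dw M assms by linarith
    finally show "dist (x, t, w) (x', t', w') < eps" .
  qed
qed



theorem mainTheorem8:
  fixes S R :: jfun and n r :: nat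
    and U :: "(complex \<times> complex \<times> (nat \<Rightarrow> complex)) set"
  assumes S_an: "jet_analytic n S U"
    and R_an: "jet_analytic r R U"
    and order_n: "\<exists>x t w. (x, t, w) \<in> U \<and> dV n S x t w \<noteq> 0"
    and miura: "\<forall>x t w. (x, t, w) \<in> U \<longrightarrow>
       Dt_evol (n + r + 6) R S x t w
         = S x t w powr (5 / 2) * (Dx (n + r + 6) ^^ 5) S x t w"
  shows "n \<le> 5"
proof (rule ccontr)
  assume "\<not> n \<le> 5"
  then have n6: "6 \<le> n" by simp
  from order_n obtain x0 t0 w0 where p0U: "(x0, t0, w0) \<in> U" and p0d: "dV n S x0 t0 w0 \<noteq> 0" by blast
  have oU: "open U" and dS: "depends_upto n S" and cS: "continuous_on U (\<lambda>(x, t, w). S x t w)"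
    and hS: "\<And>x t w k. (x, t, w) \<in> U \<Longrightarrow> (\<lambda>z. S x t (w(k := z))) holomorphic_on {z. (x, t, w(k := z)) \<in> U}"
    using S_an unfolding jet_analytic_def by auto
  have dR: "depends_upto r R"
    and hR: "\<And>x t w k. (x, t, w) \<in> U \<Longrightarrow> (\<lambda>z. R x t (w(k := z))) holomorphic_on {z. (x, t, w(k := z)) \<in> U}"
    using R_an unfolding jet_analytic_def by auto
  obtain eps0 where eps0: "eps0 > 0" "ball (x0, t0, w0) eps0 \<subseteq> U" using openE[OF oU p0U] by blast
  obtain e0 M0 where e0: "e0 > 0" and nr0: "\<And>(x::complex) (t::complex) (w::nat\<Rightarrow>complex) x' t' w'. dist x x' < e0 \<Longrightarrow> dist t t' < e0 \<Longrightarrow>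
     (\<forall>i\<in>from_nat ` {..M0}. dist (w i) (w' i) < e0) \<Longrightarrow> dist (x, t, w) (x', t', w') < eps0"
    using near[OF eps0(1)] by blast
  have nearU: "(x, t, w) \<in> U" if "dist x0 x < e0" "dist t0 t < e0" "\<forall>i\<in>from_nat ` {..M0}. dist (w0 i) (w i) < e0"
    for x t w
  proof -
    have "dist (x0, t0, w0) (x, t, w) < eps0" by (rule nr0[OF that])
    then show ?thesis using eps0(2) by auto
  qed
  define g0 where "g0 = (\<lambda>z. S x0 t0 (w0(n := z)))"
  have inU_n: "(x0, t0, w0(n := z)) \<in> U" if "z \<in> ball (w0 n) e0" for z
  proof (rule nearU)
    show "dist x0 x0 < e0" "dist t0 t0 < e0" using e0 by simp_all
    show "\<forall>i\<in>from_nat ` {..M0}. dist (w0 i) ((w0(n := z)) i) < e0"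
      using that e0 by (simp add: dist_commute)
  qed
  have hg0: "g0 holomorphic_on ball (w0 n) e0"
    unfolding g0_def by (rule holomorphic_on_subset[OF hS[OF p0U, of n]]) (use inU_n in auto)
  obtain z1 where z1: "z1 \<in> ball (w0 n) e0" "g0 z1 \<noteq> g0 (w0 n)"
  proof (rule ccontr)
    assume "\<not> thesis"
    have cst: "g0 z = g0 (w0 n)" if "z \<in> ball (w0 n) e0" for z
      using \<open>\<not> thesis\<close> that \<open>\<And>z1. z1 \<in> ball (w0 n) e0 \<Longrightarrow> g0 z1 \<noteq> g0 (w0 n) \<Longrightarrow> thesis\<close> by blast
    have c0: "w0 n \<in> ball (w0 n) e0" using e0 by simp
    have "(g0 has_field_derivative deriv g0 (w0 n)) (at (w0 n))"
      using holomorphic_derivI[OF hg0 open_ball c0, of UNIV] by simp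
    then have "deriv g0 (w0 n) = 0"
      by (rule deriv_const_on_open[OF _ open_ball c0 cst])
    moreover have "deriv g0 (w0 n) = dV n S x0 t0 w0" unfolding g0_def dV_def by simp
    ultimately show False using p0d by simp
  qed
  define S' where "S' = (\<lambda>(x, t, w). S x t w)"
  have S'_eq: "S' (x, t, w) = S x t w" for x t w unfolding S'_def by simp
  define p0 where "p0 = (x0, t0, w0)"
  define p1 where "p1 = (x0, t0, w0(n := z1))"
  have p1U: "p1 \<in> U" unfolding p1_def by (rule inU_n[OF z1(1)])
  define d where "d = dist (S' p1) (S' p0)"
  have dpos: "d > 0" using z1(2) unfolding d_def p0_def p1_def S'_eq g0_def by simp
  have cS': "continuous_on U S'" using cS unfolding S'_def .
  have "isCont S' p0" using cS' oU p0U continuous_on_eq_continuous_at unfolding p0_def by blast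
  then obtain da where da: "da > 0" "\<And>q. dist q p0 < da \<Longrightarrow> dist (S' q) (S' p0) < d / 2"
    using dpos unfolding continuous_at_eps_delta by (meson half_gt_zero)
  have "isCont S' p1" using cS' oU p1U continuous_on_eq_continuous_at by blast
  then obtain db where db: "db > 0" "\<And>q. dist q p1 < db \<Longrightarrow> dist (S' q) (S' p1) < d / 2"
    using dpos unfolding continuous_at_eps_delta by (meson half_gt_zero)
  obtain ea Ma where ea: "ea > 0" and nra: "\<And>(x::complex) (t::complex) (w::nat\<Rightarrow>complex) x' t' w'. dist x x' < ea \<Longrightarrow> dist t t' < ea \<Longrightarrow>
     (\<forall>i\<in>from_nat ` {..Ma}. dist (w i) (w' i) < ea) \<Longrightarrow> dist (x, t, w) (x', t', w') < da"
    using near[OF da(1)] by blast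
  obtain eb Mb where eb: "eb > 0" and nrb: "\<And>(x::complex) (t::complex) (w::nat\<Rightarrow>complex) x' t' w'. dist x x' < eb \<Longrightarrow> dist t t' < eb \<Longrightarrow>
     (\<forall>i\<in>from_nat ` {..Mb}. dist (w i) (w' i) < eb) \<Longrightarrow> dist (x, t, w) (x', t', w') < db"
    using near[OF db(1)] by blast
  define M where "M = max M0 (max Ma Mb)"
  define e1 where "e1 = min e0 (min ea eb)"
  have e1: "e1 > 0" "e1 \<le> e0" "e1 \<le> ea" "e1 \<le> eb" using e0 ea eb unfolding e1_def by auto
  have KM: "from_nat ` {..M0} \<subseteq> from_nat ` {..M}" "from_nat ` {..Ma} \<subseteq> from_nat ` {..M}"
     "from_nat ` {..Mb} \<subseteq> from_nat ` {..M}" unfolding M_def by auto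
  define Ks where "Ks = from_nat ` {..M} - {n}"
  define C where "C = {(x, t, w). x \<in> ball x0 e1 \<and> t \<in> ball t0 e1 \<and> (\<forall>i\<in>Ks. w i \<in> ball (w0 i) e1)
      \<and> w n \<in> ball (w0 n) e0}"
  have memC: "(x, t, w) \<in> C \<longleftrightarrow> x \<in> ball x0 e1 \<and> t \<in> ball t0 e1 \<and> (\<forall>i\<in>Ks. w i \<in> ball (w0 i) e1)
      \<and> w n \<in> ball (w0 n) e0" for x t w unfolding C_def by simp
  have CU: "(x, t, w) \<in> U" if "(x, t, w) \<in> C" for x t w
  proof (rule nearU)
    show "dist x0 x < e0" "dist t0 t < e0" using that e1 unfolding memC by auto
    show "\<forall>i\<in>from_nat ` {..M0}. dist (w0 i) (w i) < e0"
    proof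
      fix i :: nat assume i: "i \<in> from_nat ` {..M0}"
      show "dist (w0 i) (w i) < e0"
      proof (cases "i = n")
        case True then show ?thesis using that unfolding memC by simp
      next
        case False
        then have "i \<in> Ks" using i KM unfolding Ks_def by auto
        then show ?thesis using that e1 unfolding memC by fastforce
      qed
    qed
  qed
  have slx_eq: "{y. (y, t, w) \<in> C} = ball x0 e1" if "(x, t, w) \<in> C" for x t w
    using that unfolding memC by auto
  have slw_eq: "{z. (x, t, w(k := z)) \<in> C} =
      (if k = n then ball (w0 n) e0 else if k \<in> Ks then ball (w0 k) e1 else UNIV)"
    if "(x, t, w) \<in> C" for x t w k
  proof (cases "k = n")
    case True
    have "n \<notin> Ks" unfolding Ks_def by simp
    then show ?thesis using that True unfolding memC by auto
  next
    case False
    show ?thesis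
    proof (cases "k \<in> Ks")
      case True
      then show ?thesis using that False unfolding memC by (auto split: if_splits)
    next
      case F2: False
      have "\<forall>i\<in>Ks. (w(k := z)) i = w i" for z using F2 by auto
      then show ?thesis using that False F2 unfolding memC by auto
    qed
  qed
  have hSC: "(\<lambda>z. S x t (w(k := z))) holomorphic_on {z. (x, t, w(k := z)) \<in> C}" if "(x, t, w) \<in> C" for x t w k
    by (rule holomorphic_on_subset[OF hS[OF CU[OF that], of k]]) (use CU in auto)
  have hRC: "(\<lambda>z. R x t (w(k := z))) holomorphic_on {z. (x, t, w(k := z)) \<in> C}" if "(x, t, w) \<in> C" for x t w k
    by (rule holomorphic_on_subset[OF hR[OF CU[OF that], of k]]) (use CU in auto)
  have p0C: "(x0, t0, w0) \<in> C" using e0 e1 unfolding memC by auto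
  have PP1: "\<exists>z. (x, t, w(n := z)) \<in> C \<and> dV n S x t (w(n := z)) \<noteq> 0" if p: "(x, t, w) \<in> C" for x t w
  proof (rule ccontr)
    assume "\<not> ?thesis"
    then have dz: "\<And>z. (x, t, w(n := z)) \<in> C \<Longrightarrow> dV n S x t (w(n := z)) = 0" by blast
    define B where "B = ball (w0 n) e0"
    have Beq: "{z. (x, t, w(n := z)) \<in> C} = B" using slw_eq[OF p, of n] unfolding B_def by simp
    define phi where "phi = (\<lambda>z. S x t (w(n := z)))"
    have hphi: "phi holomorphic_on B" using hSC[OF p, of n] Beq unfolding phi_def by simp
    have "\<exists>K. \<forall>z\<in>B. phi z = K"
    proof (rule has_field_derivative_zero_constant)
      show "convex B" unfolding B_def by simp
      fix z assume z: "z \<in> B"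
      have "(phi has_field_derivative deriv phi z) (at z within B)"
        by (rule holomorphic_derivI[OF hphi _ z]) (simp add: B_def)
      moreover have "deriv phi z = dV n S x t (w(n := z))" unfolding phi_def dV_def by simp
      moreover have "dV n S x t (w(n := z)) = 0" using dz z Beq by blast
      ultimately show "(phi has_field_derivative 0) (at z within B)" by simp
    qed
    then obtain K where K: "\<And>z. z \<in> B \<Longrightarrow> phi z = K" by blast
    have "w0 n \<in> B" "z1 \<in> B" using e0 z1(1) unfolding B_def by auto
    then have eqphi: "phi (w0 n) = phi z1" using K by simp
    have "dist (x0, t0, w0) (x, t, w(n := w0 n)) < da"
    proof (rule nra)
      show "dist x0 x < ea" "dist t0 t < ea" using p e1 unfolding memC by auto
      show "\<forall>i\<in>from_nat ` {..Ma}. dist (w0 i) ((w(n := w0 n)) i) < ea"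
      proof
        fix i :: nat assume i: "i \<in> from_nat ` {..Ma}"
        show "dist (w0 i) ((w(n := w0 n)) i) < ea"
        proof (cases "i = n")
          case True then show ?thesis using ea by simp
        next
          case False
          then have "i \<in> Ks" using i KM unfolding Ks_def by auto
          then show ?thesis using p e1 False unfolding memC by fastforce
        qed
      qed
    qed
    then have q0: "dist (phi (w0 n)) (S' p0) < d / 2"
      using da(2)[of "(x, t, w(n := w0 n))"] unfolding phi_def p0_def S'_eq by (simp add: dist_commute)
    have "dist (x0, t0, w0(n := z1)) (x, t, w(n := z1)) < db"
    proof (rule nrb)
      show "dist x0 x < eb" "dist t0 t < eb" using p e1 unfolding memC by auto
      show "\<forall>i\<in>from_nat ` {..Mb}. dist ((w0(n := z1)) i) ((w(n := z1)) i) < eb"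
      proof
        fix i :: nat assume i: "i \<in> from_nat ` {..Mb}"
        show "dist ((w0(n := z1)) i) ((w(n := z1)) i) < eb"
        proof (cases "i = n")
          case True then show ?thesis using eb by simp
        next
          case False
          then have "i \<in> Ks" using i KM unfolding Ks_def by auto
          then show ?thesis using p e1 False unfolding memC by fastforce
        qed
      qed
    qed
    then have q1: "dist (phi z1) (S' p1) < d / 2"
      using db(2)[of "(x, t, w(n := z1))"] unfolding phi_def p1_def S'_eq by (simp add: dist_commute)
    have "d \<le> dist (S' p1) (phi z1) + dist (phi (w0 n)) (S' p0)"
      unfolding d_def using eqphi dist_triangle[of "S' p1" "S' p0" "phi z1"] by (simp add: dist_commute)
    with q0 q1 show False by (simp add: dist_commute)
  qed
  interpret core S n "n + r + 6" C w0 x0 t0 w0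
  proof
    show "6 \<le> n" by fact
    show "depends_upto n S" by fact
    show "\<And>x t w. (x, t, w) \<in> C \<Longrightarrow> (\<lambda>z. S x t (w(n := z))) holomorphic_on {z. (x, t, w(n := z)) \<in> C}"
      using hSC by blast
    show "\<And>x t w. (x, t, w) \<in> C \<Longrightarrow> open {y. (y, t, w) \<in> C}" using slx_eq by simp
    show "\<And>x t w k. (x, t, w) \<in> C \<Longrightarrow> open {z. (x, t, w(k := z)) \<in> C}" using slw_eq by simp
    show "\<And>x t w k. (x, t, w) \<in> C \<Longrightarrow> convex {z. (x, t, w(k := z)) \<in> C}" using slw_eq by simp
    show "\<And>x t w k. (x, t, w) \<in> C \<Longrightarrow> (x, t, w(k := w0 k)) \<in> C"
    proof -
      fix x t w k assume p: "(x, t, w) \<in> C"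
      have "w0 k \<in> {z. (x, t, w(k := z)) \<in> C}" using slw_eq[OF p, of k] e0 e1 by simp
      then show "(x, t, w(k := w0 k)) \<in> C" by simp
    qed
    show "\<And>x t w. (x, t, w) \<in> C \<Longrightarrow> \<exists>z. (x, t, w(n := z)) \<in> C \<and> dV n S x t (w(n := z)) \<noteq> 0"
      using PP1 by blast
    show "(x0, t0, w0) \<in> C" by fact
    show "dV n S x0 t0 w0 \<noteq> 0" by fact
  qed
  have "HR R" unfolding HR_def using hRC by blast
  moreover have "ident R" unfolding ident_def using miura CU by blast
  ultimately show False using main_ind[OF dR] by simp
qed


end
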